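(* Let $k\geq0$, $q\geq1$, $m\ge1$ and $\gamma=(\gamma_1,\ldots,\gamma_m)\in\mathbb{Z}^m$ with $\gamma_1\ge 2$ and $2\le\gamma_{i+1}\le\gamma_i+1$ for all $1\le i<m$. Then \[F^{2143}(k,q,\gamma)=\begin{cases} s^k & m=1,\\ F^{2143}(0,q{-}1,\gamma)+F^{2143}(\gamma_1{+}1{-}\gamma_2,q,\gamma') & m\geq2,\ k=0,\\ sF^{2143}(k{-}1,q,\gamma)+sF^{2143}(\gamma_1{+}1{-}\gamma_2{+}k,q,\gamma')-sF^{2143}(\gamma_1{-}\gamma_2{+}k,q,\gamma') & m\geq2,\ k\geq1. \end{cases}\]
   Context: Define $\mathrm{suc}^{2143}$ on integer triples by $\mathrm{suc}^{2143}(x,y,z)=\emptyset$ if $z\le 0$ and, for $z\ge1$, $\mathrm{suc}^{2143}(x,y,z)=\{(2,y{+}1,z),\ldots,(x{+}1,y{+}1,z)\}\cup\{(x,x{+}1,z),\ldots,(x,y,z)\}\cup\mathrm{suc}^{2143}(x,x,z{-}1)$ (second set empty if $y\le x$). A path in $\mathcal{P}^{2143}$ is a finite sequence $P=(v_1,\ldots,v_r)$, $r\ge1$, of points of $\mathbb{Z}^3$ with $v_1=(x,y,z)$ satisfying $2\le x\le y$, $z\ge1$, and $v_{i+1}\in\mathrm{suc}^{2143}(v_i)$ for all $i$; its length is $\ell(P)=r$. An edge $v_i\to v_{i+1}$ from $(x_1,y_1,z_1)$ to $(x_2,y_2,z_2)$ is recorded if either $z_1=z_2$ and $y_2=y_1+1$,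 or $z_1>z_2$. The signature $\mathrm{sig}(P)$ is the tuple consisting of the $x$-coordinate of $v_1$ followed by the $x$-coordinates of the endpoints of the recorded edges, in order. For $k\ge0$, $q\ge1$, $\gamma\in\mathbb{Z}^m$, $m\ge1$, let $\mathcal{P}^{2143}_{k,q,\gamma}$ be the set of paths in $\mathcal{P}^{2143}$ starting at $(\gamma_1,\gamma_1+k,q)$ with signature $\gamma$, and $F^{2143}(k,q,\gamma)=\sum_{P\in\mathcal{P}^{2143}_{k,q,\gamma}}t^{\ell(P)-m}$, a formal power series in $t$. By convention $F^{2143}(k,q,\gamma)=0$ if $q\le0$ or $\gamma$ is the empty tuple. Write $s=1/(1-t)=1+t+t^2+\cdots$ and $\gamma'=(\gamma_2,\ldots,\gamma_m)$ (empty if $m=1$). *)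

theory Defs
  imports "HOL-Computational_Algebra.Formal_Power_Series"
begin

type_synonym pt = "int \<times> int \<times> int"

function suc2143 :: "pt \<Rightarrow> pt set" where
  "suc2143 (x, y, z) =
     (if z \<le> 0 then {}
      else {(a, y + 1, z) | a. 2 \<le> a \<and> a \<le> x + 1}
         \<union> {(x, b, z) | b. x + 1 \<le> b \<and> b \<le> y}
         \<union> suc2143 (x, x, z - 1))"
  by pat_completeness auto
termination by (relation "measure (\<lambda>(x, y, z). nat z)") auto

definition is_path2143 :: "pt list \<Rightarrow> bool" where
  "is_path2143 P \<longleftrightarrow> P \<noteq> [] \<and>
     (case hd P of (x, y, z) \<Rightarrow> 2 \<le> x \<and> x \<le> y \<and> 1 \<le> z) \<and>
     (\<forall>i. Suc i < length P \<longrightarrow> P ! Suc i \<in> suc2143 (P ! i))"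

definition recorded2143 :: "pt \<Rightarrow> pt \<Rightarrow> bool" where
  "recorded2143 u v \<longleftrightarrow>
     (case u of (x1, y1, z1) \<Rightarrow> case v of (x2, y2, z2) \<Rightarrow>
        (z1 = z2 \<and> y2 = y1 + 1) \<or> z1 > z2)"

definition sig2143 :: "pt list \<Rightarrow> int list" where
  "sig2143 P = fst (hd P) # map (\<lambda>(u, v). fst v) (filter (\<lambda>(u, v). recorded2143 u v) (zip P (tl P)))"

definition F2143 :: "nat \<Rightarrow> int \<Rightarrow> int list \<Rightarrow> int fps" where
  "F2143 k q \<gamma> =
     (if q \<le> 0 \<or> \<gamma> = [] then 0
      else Abs_fps (\<lambda>n. int (card {P. is_path2143 P \<and> hd P = (\<gamma> ! 0, \<gamma> ! 0 + int k, q)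
                                   \<and> sig2143 P = \<gamma> \<and> length P = n + length \<gamma>})))"

text \<open>s = 1/(1-t) = 1 + t + t^2 + ...\<close>
definition s2143 :: "int fps" where
  "s2143 = Abs_fps (\<lambda>n. 1)"

end

theory Submission
  imports Defs
begin

definition chain2143 :: "pt list \<Rightarrow> bool" where
  "chain2143 P \<longleftrightarrow> (\<forall>i. Suc i < length P \<longrightarrow> P ! Suc i \<in> suc2143 (P ! i))"

declare suc2143.simps[simp del]

lemma suc_pos: "z > 0 \<Longrightarrow> suc2143 (x, y, z) = {(a, y + 1, z) | a. 2 \<le> a \<and> a \<le> x + 1}
         \<union> {(x, b, z) | b. x + 1 \<le> b \<and> b \<le> y} \<union> suc2143 (x, x, z - 1)"
  by (simp add: suc2143.simps)

lemma suc_nonpos: "z \<le> 0 \<Longrightarrow> suc2143 (x, y, z) = {}"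
  by (simp add: suc2143.simps)

lemma chain_single[simp]: "chain2143 [v]"
  by (auto simp: chain2143_def)

lemma chain_Cons2[simp]: "chain2143 (v # w # P) \<longleftrightarrow> w \<in> suc2143 v \<and> chain2143 (w # P)"
proof
  assume h: "chain2143 (v # w # P)"
  have "w \<in> suc2143 v" using h[unfolded chain2143_def, rule_format, of 0] by simp
  moreover have "chain2143 (w # P)" unfolding chain2143_def
  proof (intro allI impI)
    fix i assume "Suc i < length (w # P)"
    then show "(w # P) ! Suc i \<in> suc2143 ((w # P) ! i)"
      using h[unfolded chain2143_def, rule_format, of "Suc i"] by simp
  qed
  ultimately show "w \<in> suc2143 v \<and> chain2143 (w # P)" by simp
next
  assume h: "w \<in> suc2143 v \<and> chain2143 (w # P)"
  show "chain2143 (v # w # P)" unfolding chain2143_def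
  proof (intro allI impI)
    fix i assume "Suc i < length (v # w # P)"
    then show "(v # w # P) ! Suc i \<in> suc2143 ((v # w # P) ! i)"
      using h h[THEN conjunct2, unfolded chain2143_def, rule_format, of "i - 1"]
      by (cases i) auto
  qed
qed

lemma sig_single[simp]: "sig2143 [v] = [fst v]" by (simp add: sig2143_def)

lemma sig_Cons2: "sig2143 (v # w # P) = fst v # (if recorded2143 v w then sig2143 (w # P) else tl (sig2143 (w # P)))"
  by (simp add: sig2143_def)

lemma sig_ne[simp]: "sig2143 P \<noteq> []" by (simp add: sig2143_def)
lemma hd_sig: "hd (sig2143 P) = fst (hd P)" by (simp add: sig2143_def)

lemma length_sig: "P \<noteq> [] \<Longrightarrow> length (sig2143 P) \<le> length P"
proof -
  assume "P \<noteq> []"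
  have "length (filter (\<lambda>(u, v). recorded2143 u v) (zip P (tl P))) \<le> length (zip P (tl P))"
    by (rule length_filter_le)
  also have "\<dots> \<le> length P - 1" by simp
  finally show ?thesis using \<open>P \<noteq> []\<close> by (simp add: sig2143_def) (cases P; simp)
qed

lemma suc_z_le: "w \<in> suc2143 v \<Longrightarrow> snd (snd w) \<le> snd (snd v)"
proof (induction v rule: suc2143.induct)
  case (1 x y z)
  show ?case
  proof (cases "z \<le> 0")
    case True then show ?thesis using 1(2) by (simp add: suc_nonpos)
  next
    case False
    then have "w \<in> {(a, y + 1, z) | a. 2 \<le> a \<and> a \<le> x + 1}
         \<union> {(x, b, z) | b. x + 1 \<le> b \<and> b \<le> y} \<union> suc2143 (x, x, z - 1)" using 1(2) by (simp add: suc_pos)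
    then show ?thesis using 1(1)[OF False] by auto
  qed
qed

lemma suc_diag: "suc2143 (x, x, z) = {(a, x + 1, z') | a z'. 2 \<le> a \<and> a \<le> x + 1 \<and> 1 \<le> z' \<and> z' \<le> z}"
proof (induction "nat z" arbitrary: z)
  case 0
  then show ?case by (auto simp: suc_nonpos)
next
  case (Suc m)
  then have "m = nat (z - 1)" by simp
  then have "suc2143 (x, x, z - 1) = {(a, x + 1, z') | a z'. 2 \<le> a \<and> a \<le> x + 1 \<and> 1 \<le> z' \<and> z' \<le> z - 1}"
    using Suc(1) by blast
  moreover have "z > 0" using Suc by simp
  ultimately have e: "suc2143 (x, x, z) = {(a, x + 1, z) | a. 2 \<le> a \<and> a \<le> x + 1}
         \<union> {(x, b, z) | b. x + 1 \<le> b \<and> b \<le> x} \<union> {(a, x + 1, z') | a z'. 2 \<le> a \<and> a \<le> x + 1 \<and> 1 \<le> z' \<and> z' \<le> z - 1}"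
    by (simp add: suc_pos)
  show ?case unfolding e
  proof (intro equalityI subsetI)
    fix w assume "w \<in> {(a, x + 1, z) | a. 2 \<le> a \<and> a \<le> x + 1}
         \<union> {(x, b, z) | b. x + 1 \<le> b \<and> b \<le> x} \<union> {(a, x + 1, z') | a z'. 2 \<le> a \<and> a \<le> x + 1 \<and> 1 \<le> z' \<and> z' \<le> z - 1}"
    then show "w \<in> {(a, x + 1, z') | a z'. 2 \<le> a \<and> a \<le> x + 1 \<and> 1 \<le> z' \<and> z' \<le> z}"
      using \<open>z > 0\<close> by fastforce
  next
    fix w assume "w \<in> {(a, x + 1, z') | a z'. 2 \<le> a \<and> a \<le> x + 1 \<and> 1 \<le> z' \<and> z' \<le> z}"
    then obtain a z' where w: "w = (a, x+1, z')" "2 \<le> a" "a \<le> x + 1" "1 \<le> z'" "z' \<le> z" by blast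
    show "w \<in> {(a, x + 1, z) | a. 2 \<le> a \<and> a \<le> x + 1}
         \<union> {(x, b, z) | b. x + 1 \<le> b \<and> b \<le> x} \<union> {(a, x + 1, z') | a z'. 2 \<le> a \<and> a \<le> x + 1 \<and> 1 \<le> z' \<and> z' \<le> z - 1}"
    proof (cases "z' = z")
      case True then show ?thesis using w by blast
    next
      case False then show ?thesis using w by auto
    qed
  qed
qed

lemma finite_suc: "finite (suc2143 v)"
proof (induction v rule: suc2143.induct)
  case (1 x y z)
  have a: "{(a, y + 1, z) | a. 2 \<le> a \<and> a \<le> x + 1} = (\<lambda>a. (a, y+1, z)) ` {2..x+1}" by auto
  have b: "{(x, b, z) | b. x + 1 \<le> b \<and> b \<le> y} = (\<lambda>b. (x, b, z)) ` {x+1..y}" by auto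
  show ?case using 1 by (cases "z \<le> 0") (simp_all add: suc_nonpos suc_pos a b)
qed

definition Sset :: "pt \<Rightarrow> int list \<Rightarrow> nat \<Rightarrow> pt list set" where
  "Sset v \<gamma> n = {P. P \<noteq> [] \<and> chain2143 P \<and> hd P = v \<and> sig2143 P = \<gamma> \<and> length P = n + length \<gamma>}"

lemma Sset_Nil[simp]: "Sset v [] n = {}" by (auto simp: Sset_def)

lemma Sset_hd: "fst v \<noteq> g \<Longrightarrow> Sset v (g # \<gamma>') n = {}"
  by (auto simp: Sset_def) (metis hd_sig list.sel(1))

lemma nonrec_char:
  assumes "w \<in> suc2143 (x, y, z)" "\<not> recorded2143 (x, y, z) w"
  shows "\<exists>b. w = (x, b, z) \<and> x + 1 \<le> b \<and> b \<le> y"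
proof -
  have z: "z > 0" using assms(1) by (cases "z \<le> 0") (auto simp: suc_nonpos)
  then have "w \<in> {(a, y + 1, z) | a. 2 \<le> a \<and> a \<le> x + 1}
         \<union> {(x, b, z) | b. x + 1 \<le> b \<and> b \<le> y} \<union> suc2143 (x, x, z - 1)" using assms(1) by (simp add: suc_pos)
  moreover have "w \<notin> {(a, y + 1, z) | a. 2 \<le> a \<and> a \<le> x + 1}" using assms(2) by (auto simp: recorded2143_def)
  moreover have "w \<notin> suc2143 (x, x, z - 1)"
  proof
    assume "w \<in> suc2143 (x, x, z - 1)"
    then have "snd (snd w) \<le> z - 1" using suc_z_le by fastforce
    then show False using assms(2) by (auto simp: recorded2143_def split: prod.splits)
  qed
  ultimately show ?thesis by blast
qed

lemma nonrec_fst: "w \<in> suc2143 v \<Longrightarrow> \<not> recorded2143 v w \<Longrightarrow> fst w = fst v"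
  using nonrec_char by (cases v) fastforce

lemma Sset_decomp:
  assumes "fst v = g"
  shows "Sset v (g # \<gamma>') n = (if \<gamma>' = [] \<and> n = 0 then {[v]} else {})
     \<union> Cons v ` (\<Union>w\<in>{w\<in>suc2143 v. recorded2143 v w}. Sset w \<gamma>' n)
     \<union> (if 0 < n then Cons v ` (\<Union>w\<in>{w\<in>suc2143 v. \<not> recorded2143 v w}. Sset w (g # \<gamma>') (n - 1)) else {})"
  (is "?L = ?A \<union> ?B \<union> ?C")
proof (intro equalityI subsetI)
  fix P assume P: "P \<in> ?L"
  then obtain P' where PP: "P = v # P'" unfolding Sset_def by (cases P) auto
  show "P \<in> ?A \<union> ?B \<union> ?C"
  proof (cases P')
    case Nil
    then show ?thesis using P PP by (auto simp: Sset_def)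
  next
    case (Cons w P'')
    have ch: "w \<in> suc2143 v" "chain2143 (w # P'')" using P PP Cons by (auto simp: Sset_def)
    have sg: "sig2143 P = g # \<gamma>'" and len: "length P = n + length (g # \<gamma>')" using P by (auto simp: Sset_def)
    show ?thesis
    proof (cases "recorded2143 v w")
      case True
      then have "sig2143 (w # P'') = \<gamma>'" using sg PP Cons by (simp add: sig_Cons2)
      then have "w # P'' \<in> Sset w \<gamma>' n" using ch len PP Cons by (auto simp: Sset_def)
      then have "P \<in> ?B" using PP Cons True ch by blast
      then show ?thesis by blast
    next
      case False
      then have t: "tl (sig2143 (w # P'')) = \<gamma>'" using sg PP Cons by (simp add: sig_Cons2)
      have "hd (sig2143 (w # P'')) = g" using hd_sig[of "w # P''"] nonrec_fst[OF ch(1) False] assms by simp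
      then have s2: "sig2143 (w # P'') = g # \<gamma>'" using t by (metis list.collapse sig_ne)
      have "length (sig2143 (w # P'')) \<le> length (w # P'')" by (rule length_sig) simp
      then have n0: "0 < n" using s2 len PP Cons by simp
      then have "w # P'' \<in> Sset w (g # \<gamma>') (n - 1)" using ch len PP Cons s2 by (auto simp: Sset_def)
      then have "P \<in> ?C" using PP Cons False ch n0 by auto
      then show ?thesis by blast
    qed
  qed
next
  fix P assume "P \<in> ?A \<union> ?B \<union> ?C"
  then consider "P \<in> ?A" | "P \<in> ?B" | "P \<in> ?C" by blast
  then show "P \<in> ?L"
  proof cases
    case 1 then show ?thesis using assms by (auto simp: Sset_def split: if_splits)
  next
    case 2
    then obtain w P' where w: "w \<in> suc2143 v" "recorded2143 v w" "P' \<in> Sset w \<gamma>' n" "P = v # P'" by blast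
    then obtain P'' where "P' = w # P''" unfolding Sset_def by (cases P') auto
    then show ?thesis using w assms by (auto simp: Sset_def sig_Cons2)
  next
    case 3
    then obtain w P' where w: "w \<in> suc2143 v" "\<not> recorded2143 v w" "P' \<in> Sset w (g # \<gamma>') (n - 1)" "P = v # P'" "0 < n"
      by (auto split: if_splits)
    then obtain P'' where "P' = w # P''" unfolding Sset_def by (cases P') auto
    then show ?thesis using w assms by (auto simp: Sset_def sig_Cons2)
  qed
qed

lemma finite_Sset: "finite (Sset v \<gamma> n)"
proof (induction "n + length \<gamma>" arbitrary: v \<gamma> n rule: less_induct)
  case less
  show ?case
  proof (cases \<gamma>)
    case Nil then show ?thesis by simp
  next
    case (Cons g \<gamma>')
    show ?thesis
    proof (cases "fst v = g")
      case False then show ?thesis using Cons Sset_hd by simp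
    next
      case True
      have f1: "finite (\<Union>w\<in>{w\<in>suc2143 v. recorded2143 v w}. Sset w \<gamma>' n)"
        using less Cons finite_suc by auto
      have f2: "finite (\<Union>w\<in>{w\<in>suc2143 v. \<not> recorded2143 v w}. Sset w (g # \<gamma>') (n - 1))" if "0 < n"
        using less Cons finite_suc that by auto
      show ?thesis unfolding Cons Sset_decomp[OF True] using f1 f2 by auto
    qed
  qed
qed

lemma Sset_disj: "w \<noteq> w' \<Longrightarrow> Sset w \<gamma> n \<inter> Sset w' \<gamma>' n' = {}" by (auto simp: Sset_def)

lemma card_UN_Sset:
  assumes "finite I"
  shows "card (\<Union>w\<in>I. Sset w \<gamma> n) = (\<Sum>w\<in>I. card (Sset w \<gamma> n))"
  using assms by (intro card_UN_disjoint) (auto simp: finite_Sset Sset_disj)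

lemma card_Sset:
  assumes "fst v = g"
  shows "card (Sset v (g # \<gamma>') n) = (if \<gamma>' = [] \<and> n = 0 then 1 else 0)
     + (\<Sum>w\<in>{w\<in>suc2143 v. recorded2143 v w}. card (Sset w \<gamma>' n))
     + (if 0 < n then \<Sum>w\<in>{w\<in>suc2143 v. \<not> recorded2143 v w}. card (Sset w (g # \<gamma>') (n - 1)) else 0)"
proof -
  let ?R = "{w\<in>suc2143 v. recorded2143 v w}" and ?N = "{w\<in>suc2143 v. \<not> recorded2143 v w}"
  let ?A = "(if \<gamma>' = [] \<and> n = 0 then {[v]} else {}) :: pt list set"
  let ?B = "Cons v ` (\<Union>w\<in>?R. Sset w \<gamma>' n)"
  let ?C = "(if 0 < n then Cons v ` (\<Union>w\<in>?N. Sset w (g # \<gamma>') (n - 1)) else {})"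
  have fR: "finite ?R" and fN: "finite ?N" using finite_suc by auto
  have fB: "finite ?B" using fR by (auto simp: finite_Sset)
  have fC: "finite ?C" using fN by (auto simp: finite_Sset)
  have d1: "?A \<inter> ?B = {}" by (auto simp: Sset_def)
  have d2: "(?A \<union> ?B) \<inter> ?C = {}"
  proof -
    have "?A \<inter> ?C = {}" by (auto simp: Sset_def)
    moreover have "?B \<inter> ?C = {}"
    proof (rule ccontr)
      assume "?B \<inter> ?C \<noteq> {}"
      then obtain P w w' where "P \<in> Sset w \<gamma>' n" "P \<in> Sset w' (g # \<gamma>') (n - 1)" "recorded2143 v w" "\<not> recorded2143 v w'"
        by (auto split: if_splits)
      then show False by (auto simp: Sset_def)
    qed
    ultimately show ?thesis by blast
  qed
  have cB: "card ?B = (\<Sum>w\<in>?R. card (Sset w \<gamma>' n))"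
    by (subst card_image) (auto simp: card_UN_Sset fR)
  have cC: "card ?C = (if 0 < n then \<Sum>w\<in>?N. card (Sset w (g # \<gamma>') (n - 1)) else 0)"
    by (simp, subst card_image) (auto simp: card_UN_Sset fN)
  have "card (?A \<union> ?B \<union> ?C) = card ?A + card ?B + card ?C"
    using d1 d2 fB fC by (simp add: card_Un_disjoint)
  then show ?thesis unfolding Sset_decomp[OF assms] cB cC by simp
qed

lemma R_eq:
  assumes "z > 0"
  shows "{w\<in>suc2143 (x, y, z). recorded2143 (x, y, z) w} = (\<lambda>a. (a, y+1, z)) ` {2..x+1} \<union> suc2143 (x, x, z - 1)"
proof -
  have C: "\<And>w. w \<in> suc2143 (x, x, z - 1) \<Longrightarrow> recorded2143 (x, y, z) w"
    using suc_z_le by (fastforce simp: recorded2143_def split: prod.splits)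
  have A: "\<And>w. w \<in> (\<lambda>a. (a, y+1, z)) ` {2..x+1} \<Longrightarrow> recorded2143 (x, y, z) w"
    by (auto simp: recorded2143_def)
  have B: "\<And>w. w \<in> {(x, b, z) | b. x + 1 \<le> b \<and> b \<le> y} \<Longrightarrow> \<not> recorded2143 (x, y, z) w"
    by (auto simp: recorded2143_def)
  have e: "{(a, y + 1, z) | a. 2 \<le> a \<and> a \<le> x + 1} = (\<lambda>a. (a, y+1, z)) ` {2..x+1}" by auto
  have s: "suc2143 (x, y, z) = (\<lambda>a. (a, y+1, z)) ` {2..x+1} \<union> {(x, b, z) | b. x + 1 \<le> b \<and> b \<le> y} \<union> suc2143 (x, x, z - 1)"
    using suc_pos[OF assms, of x y] e by simp
  show ?thesis unfolding s using A B C by blast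
qed

lemma N_eq:
  assumes "z > 0"
  shows "{w\<in>suc2143 (x, y, z). \<not> recorded2143 (x, y, z) w} = (\<lambda>b. (x, b, z)) ` {x+1..y}"
proof (intro equalityI subsetI)
  fix w assume "w \<in> {w\<in>suc2143 (x, y, z). \<not> recorded2143 (x, y, z) w}"
  then show "w \<in> (\<lambda>b. (x, b, z)) ` {x+1..y}" using nonrec_char by fastforce
next
  fix w assume "w \<in> (\<lambda>b. (x, b, z)) ` {x+1..y}"
  then show "w \<in> {w\<in>suc2143 (x, y, z). \<not> recorded2143 (x, y, z) w}"
    using assms by (auto simp: suc_pos recorded2143_def)
qed

lemma sum_R:
  assumes z: "z > 0" and g: "2 \<le> g2" "g2 \<le> x + 1" and f: "\<And>w. fst w \<noteq> g2 \<Longrightarrow> f w = 0"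
  shows "(\<Sum>w\<in>{w\<in>suc2143 (x, y, z). recorded2143 (x, y, z) w}. f w)
      = f (g2, y+1, z) + (\<Sum>z'\<in>{1..z-1}. f (g2, x+1, z'))"
proof -
  let ?A = "(\<lambda>a. (a, y+1, z)) ` {2..x+1}" and ?C = "suc2143 (x, x, z - 1)"
  have disj: "?A \<inter> ?C = {}" using suc_z_le by fastforce
  have fA: "finite ?A" and fC: "finite ?C" by (auto simp: finite_suc)
  have sA: "(\<Sum>w\<in>?A. f w) = (\<Sum>w\<in>{(g2, y+1, z)}. f w)"
  proof (rule sum.mono_neutral_right)
    show "\<forall>i\<in>?A - {(g2, y+1, z)}. f i = 0" using f by force
  qed (use g in auto)
  have Csub: "(\<lambda>z'. (g2, x+1, z')) ` {1..z-1} \<subseteq> ?C" using g by (auto simp: suc_diag)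
  have sC: "(\<Sum>w\<in>?C. f w) = (\<Sum>w\<in>(\<lambda>z'. (g2, x+1, z')) ` {1..z-1}. f w)"
  proof (rule sum.mono_neutral_right[OF fC Csub], intro ballI)
    fix w assume w: "w \<in> ?C - (\<lambda>z'. (g2, x+1, z')) ` {1..z-1}"
    then obtain a z' where "w = (a, x+1, z')" "1 \<le> z'" "z' \<le> z - 1" by (auto simp: suc_diag)
    then have "fst w \<noteq> g2" using w by auto
    then show "f w = 0" by (rule f)
  qed
  also have "\<dots> = (\<Sum>z'\<in>{1..z-1}. f (g2, x+1, z'))"
    by (subst sum.reindex) (auto simp: inj_on_def)
  finally show ?thesis unfolding R_eq[OF z] sum.union_disjoint[OF fA fC disj] sA by simp
qed

lemma img_int: "(\<lambda>j. x + int j) ` {1..k} = {x+1..x + int k}"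
proof (intro equalityI subsetI)
  fix b assume "b \<in> {x+1..x + int k}"
  then have "b = x + int (nat (b - x))" "nat (b - x) \<in> {1..k}" by auto
  then show "b \<in> (\<lambda>j. x + int j) ` {1..k}" by blast
qed auto

lemma sum_N:
  assumes z: "z > 0"
  shows "(\<Sum>w\<in>{w\<in>suc2143 (x, x + int k, z). \<not> recorded2143 (x, x + int k, z) w}. f w)
      = (\<Sum>j\<in>{1..k}. f (x, x + int j, z))"
proof -
  have "(\<lambda>b. (x, b, z)) ` {x+1..x + int k} = (\<lambda>j. (x, x + int j, z)) ` {1..k}"
    unfolding img_int[symmetric] by auto
  then show ?thesis unfolding N_eq[OF z] by (simp add: sum.reindex inj_on_def)
qed

lemma F_coeff:
  assumes "q \<ge> 1" "2 \<le> x"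
  shows "F2143 k q (x # \<gamma>') = Abs_fps (\<lambda>n. int (card (Sset (x, x + int k, q) (x # \<gamma>') n)))"
proof -
  have "{P. is_path2143 P \<and> hd P = (x, x + int k, q) \<and> sig2143 P = x # \<gamma>' \<and> length P = n + length (x # \<gamma>')}
     = Sset (x, x + int k, q) (x # \<gamma>') n" for n
    using assms by (auto simp: is_path2143_def chain2143_def Sset_def)
  then show ?thesis using assms by (simp add: F2143_def)
qed

lemma F_nonpos: "q \<le> 0 \<Longrightarrow> F2143 k q \<gamma> = 0"
  by (simp add: F2143_def)

lemma card_rec:
  assumes q: "q \<ge> 1" and x: "x \<ge> 2" and g: "\<gamma>' = [] \<or> (2 \<le> hd \<gamma>' \<and> hd \<gamma>' \<le> x + 1)"
  shows "card (Sset (x, x + int k, q) (x # \<gamma>') n) = (if \<gamma>' = [] \<and> n = 0 then 1 else 0)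
    + (if \<gamma>' = [] then 0 else card (Sset (hd \<gamma>', x + int k + 1, q) \<gamma>' n)
         + (\<Sum>z'\<in>{1..q-1}. card (Sset (hd \<gamma>', x + 1, z') \<gamma>' n)))
    + (if 0 < n then \<Sum>j\<in>{1..k}. card (Sset (x, x + int j, q) (x # \<gamma>') (n - 1)) else 0)"
proof -
  have q0: "q > 0" using q by simp
  have R: "(\<Sum>w\<in>{w\<in>suc2143 (x, x + int k, q). recorded2143 (x, x + int k, q) w}. card (Sset w \<gamma>' n))
     = (if \<gamma>' = [] then 0 else card (Sset (hd \<gamma>', x + int k + 1, q) \<gamma>' n)
         + (\<Sum>z'\<in>{1..q-1}. card (Sset (hd \<gamma>', x + 1, z') \<gamma>' n)))"
  proof (cases \<gamma>')
    case Nil then show ?thesis by simp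
  next
    case (Cons g2 \<gamma>'')
    then have g': "2 \<le> g2" "g2 \<le> x + 1" using g by auto
    show ?thesis unfolding Cons
      by (subst sum_R[OF q0 g']) (auto simp: Sset_hd)
  qed
  show ?thesis
    unfolding card_Sset[of "(x, x + int k, q)" x, simplified] R sum_N[OF q0] by simp
qed

lemma F_rec_cons:
  assumes q: "q \<ge> 1" and x: "x \<ge> 2" and g: "2 \<le> g2" "g2 \<le> x + 1"
  shows "F2143 k q (x # g2 # \<gamma>'') = F2143 (nat (x + 1 - g2 + int k)) q (g2 # \<gamma>'')
     + (\<Sum>z\<in>{1..q-1}. F2143 (nat (x + 1 - g2)) z (g2 # \<gamma>''))
     + fps_X * (\<Sum>j\<in>{1..k}. F2143 j q (x # g2 # \<gamma>''))"
proof (rule fps_ext)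
  fix n
  let ?g = "g2 # \<gamma>''" and ?G = "x # g2 # \<gamma>''"
  have e1: "F2143 (nat (x + 1 - g2 + int k)) q ?g = Abs_fps (\<lambda>n. int (card (Sset (g2, x + int k + 1, q) ?g n)))"
    using F_coeff[OF q g(1), of "nat (x + 1 - g2 + int k)" \<gamma>''] g by (simp add: ac_simps)
  have e2: "(\<Sum>z\<in>{1..q-1}. F2143 (nat (x + 1 - g2)) z ?g) = (\<Sum>z\<in>{1..q-1}. Abs_fps (\<lambda>n. int (card (Sset (g2, x+1, z) ?g n))))"
  proof (rule sum.cong)
    fix z assume "z \<in> {1..q-1}"
    then show "F2143 (nat (x + 1 - g2)) z ?g = Abs_fps (\<lambda>n. int (card (Sset (g2, x+1, z) ?g n)))"
      using F_coeff[of z g2 "nat (x + 1 - g2)" \<gamma>''] g by simp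
  qed simp
  have e3: "(\<Sum>j\<in>{1..k}. F2143 j q ?G) = (\<Sum>j\<in>{1..k}. Abs_fps (\<lambda>n. int (card (Sset (x, x + int j, q) ?G n))))"
    using F_coeff[OF q x] by simp
  show "fps_nth (F2143 k q ?G) n = fps_nth (F2143 (nat (x + 1 - g2 + int k)) q ?g
     + (\<Sum>z\<in>{1..q-1}. F2143 (nat (x + 1 - g2)) z ?g)
     + fps_X * (\<Sum>j\<in>{1..k}. F2143 j q ?G)) n"
    unfolding e1 e2 e3 F_coeff[OF q x]
    using card_rec[OF q x, of "g2 # \<gamma>''" k n] g by (simp add: fps_sum_nth fps_X_mult_nth)
qed

lemma F_rec_single:
  assumes q: "q \<ge> 1" and x: "x \<ge> 2"
  shows "F2143 k q [x] = 1 + fps_X * (\<Sum>j\<in>{1..k}. F2143 j q [x])"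
proof (rule fps_ext)
  fix n
  have e3: "(\<Sum>j\<in>{1..k}. F2143 j q [x]) = (\<Sum>j\<in>{1..k}. Abs_fps (\<lambda>n. int (card (Sset (x, x + int j, q) [x] n))))"
    using F_coeff[OF q x] by simp
  show "fps_nth (F2143 k q [x]) n = fps_nth (1 + fps_X * (\<Sum>j\<in>{1..k}. F2143 j q [x])) n"
    unfolding e3 F_coeff[OF q x]
    using card_rec[OF q x, of "[]" k n] by (simp add: fps_sum_nth fps_X_mult_nth)
qed

lemma s_inv: "s2143 * (1 - fps_X) = 1"
proof (rule fps_ext)
  fix n
  have "s2143 * (1 - fps_X) = s2143 - fps_X * s2143" by (simp add: algebra_simps)
  then show "fps_nth (s2143 * (1 - fps_X)) n = fps_nth (1 :: int fps) n"
    by (simp add: fps_X_mult_nth s2143_def)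
qed

lemma solve_X: "(A :: int fps) = fps_X * A + B \<Longrightarrow> A = s2143 * B"
proof -
  assume h: "A = fps_X * A + B"
  then have "B = A * (1 - fps_X)" by (simp add: algebra_simps)
  then have "s2143 * B = A * (s2143 * (1 - fps_X))" by (simp only: mult.commute mult.left_commute)
  then show ?thesis by (simp add: s_inv)
qed

lemma F_single_pow: "q \<ge> 1 \<Longrightarrow> x \<ge> 2 \<Longrightarrow> F2143 k q [x] = s2143 ^ k"
proof (induction k)
  case 0 then show ?case using F_rec_single[of q x 0] by simp
next
  case (Suc k)
  have a: "F2143 (Suc k) q [x] = 1 + fps_X * (\<Sum>j\<in>{1..k}. F2143 j q [x]) + fps_X * F2143 (Suc k) q [x]"
    using F_rec_single[OF Suc.prems, of "Suc k"] by (simp add: algebra_simps)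
  have b: "F2143 k q [x] = 1 + fps_X * (\<Sum>j\<in>{1..k}. F2143 j q [x])" by (rule F_rec_single[OF Suc.prems])
  have "F2143 (Suc k) q [x] = fps_X * F2143 (Suc k) q [x] + F2143 k q [x]" using a b by (metis add.commute)
  then have "F2143 (Suc k) q [x] = s2143 * F2143 k q [x]" by (rule solve_X)
  then show ?case using Suc by simp
qed

theorem lemma3p4:
  fixes k :: nat and q :: int and \<gamma> :: "int list"
  assumes "q \<ge> 1" and "\<gamma> \<noteq> []" and "\<gamma> ! 0 \<ge> 2"
    and "\<forall>i. Suc i < length \<gamma> \<longrightarrow> 2 \<le> \<gamma> ! Suc i \<and> \<gamma> ! Suc i \<le> \<gamma> ! i + 1"
  shows "F2143 k q \<gamma> =
    (if length \<gamma> = 1 then s2143 ^ k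
     else if k = 0 then
       F2143 0 (q - 1) \<gamma> + F2143 (nat (\<gamma> ! 0 + 1 - \<gamma> ! 1)) q (tl \<gamma>)
     else
       s2143 * F2143 (k - 1) q \<gamma>
       + s2143 * F2143 (nat (\<gamma> ! 0 + 1 - \<gamma> ! 1 + int k)) q (tl \<gamma>)
       - s2143 * F2143 (nat (\<gamma> ! 0 - \<gamma> ! 1 + int k)) q (tl \<gamma>))"
proof -
  obtain x \<gamma>' where \<gamma>: "\<gamma> = x # \<gamma>'" using assms(2) by (cases \<gamma>) auto
  have x: "x \<ge> 2" using assms(3) \<gamma> by simp
  show ?thesis
  proof (cases "\<gamma>' = []")
    case True
    then show ?thesis using \<gamma> F_single_pow[OF assms(1) x] by simp
  next
    case False
    then obtain g2 \<gamma>'' where \<gamma>': "\<gamma>' = g2 # \<gamma>''" by (cases \<gamma>') auto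
    have g: "2 \<le> g2" "g2 \<le> x + 1" using assms(4)[rule_format, of 0] \<gamma> \<gamma>' by auto
    let ?g = "g2 # \<gamma>''"
    let ?d = "nat (x + 1 - g2)"
    let ?C = "\<lambda>q. (\<Sum>z\<in>{1..q-1}. F2143 ?d z ?g)"
    have len: "length \<gamma> \<noteq> 1" using \<gamma> \<gamma>' by simp
    have n1: "\<gamma> ! 0 = x" "\<gamma> ! 1 = g2" "tl \<gamma> = ?g" using \<gamma> \<gamma>' by auto
    show ?thesis
    proof (cases k)
      case 0
      have r: "F2143 0 q \<gamma> = F2143 ?d q ?g + ?C q"
        using F_rec_cons[OF assms(1) x g, of 0 \<gamma>''] \<gamma> \<gamma>' by simp
      have "F2143 0 q \<gamma> = F2143 0 (q - 1) \<gamma> + F2143 ?d q ?g"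
      proof (cases "q = 1")
        case True
        then show ?thesis using r by (simp add: F_nonpos)
      next
        case False
        then have q1: "q - 1 \<ge> 1" using assms(1) by simp
        have r': "F2143 0 (q - 1) \<gamma> = F2143 ?d (q - 1) ?g + ?C (q - 1)"
          using F_rec_cons[OF q1 x g, of 0 \<gamma>''] \<gamma> \<gamma>' by simp
        have "{1..q-1} = insert (q - 1) {1..q-1-1}" using q1 by auto
        then have "?C q = F2143 ?d (q - 1) ?g + ?C (q - 1)" by simp
        then show ?thesis using r r' by (simp add: algebra_simps)
      qed
      then show ?thesis using len n1 0 by simp
    next
      case (Suc k')
      have r1: "F2143 k q \<gamma> = F2143 (nat (x + 1 - g2 + int k)) q ?g + ?C q
          + fps_X * (\<Sum>j\<in>{1..k'}. F2143 j q \<gamma>) + fps_X * F2143 k q \<gamma>"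
        using F_rec_cons[OF assms(1) x g, of k \<gamma>''] \<gamma> \<gamma>' Suc by (simp add: algebra_simps)
      have r0: "F2143 k' q \<gamma> = F2143 (nat (x + 1 - g2 + int k')) q ?g + ?C q
          + fps_X * (\<Sum>j\<in>{1..k'}. F2143 j q \<gamma>)"
        using F_rec_cons[OF assms(1) x g, of k' \<gamma>''] \<gamma> \<gamma>' by simp
      have "F2143 k q \<gamma> = fps_X * F2143 k q \<gamma>
          + (F2143 k' q \<gamma> + F2143 (nat (x + 1 - g2 + int k)) q ?g - F2143 (nat (x + 1 - g2 + int k')) q ?g)"
        using r1 r0 by (simp add: algebra_simps)
      then have "F2143 k q \<gamma> = s2143 * (F2143 k' q \<gamma> + F2143 (nat (x + 1 - g2 + int k)) q ?g - F2143 (nat (x + 1 - g2 + int k')) q ?g)"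
        by (rule solve_X)
      moreover have "nat (x - g2 + int k) = nat (x + 1 - g2 + int k')" using Suc by simp
      ultimately show ?thesis using len n1 Suc by (simp add: algebra_simps)
    qed
  qed
qed

end
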